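(* Let $G=(V,E)$ be a graph with adjacency matrix $A=(a_{ij})$. Assume $f_\pi:\mathcal{A}_{RW}(G)\to\mathcal{A}(G)$ is an isomorphism of the form $f_\pi(e_i)=\alpha_i e_{\pi(i)}$ for all $i\in V$, where $\alpha_i\neq0$ are scalars and $\pi$ is a permutation of $V$. Then $$a_{i\,\pi^{-1}(k)}\,\alpha_{\pi^{-1}(k)}=\deg(i)\,\alpha_i^2\,a_{\pi(i)\,k}\quad\text{for all } i,k\in V.$$
   Context: Graphs are simple (no loops or multiple edges), connected, with countable (finite or infinite) vertex set $V$, and locally finite ($\deg(i)<\infty$ for all $i$, where $\deg(i)$ is the number of neighbors of $i$). The adjacency matrix is $A=(a_{ij})$ with $a_{ij}=1$ if $i,j$ are neighbors and $0$ otherwise. An evolution algebra over $\mathbb{R}$ is an algebra with a countable basis $\{e_i\}$ (natural basis) such that $e_i\cdot e_j=0$ for $i\ne j$ and $e_i\cdot e_i=\sum_k c_{ik}e_k$. $\mathcal{A}(G)$ has natural basis $\{e_i:i\in V\}$ with $e_i\cdot e_i=\sum_{k\in V}a_{ik}e_k$; $\mathcal{A}_{RW}(G)$ has natural basis $\{e_i:i\in V\}$ with $e_i\cdot e_i=\sum_{k\in V}\frac{a_{ik}}{\deg(i)}e_k$; in both, $e_i\cdot e_j=0$ for $i\ne j$. An isomorphism is a bijective linear map preserving the product. *)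

theory Defs
  imports Complex_Main "HOL-Library.Countable_Set"
begin

definition graph :: "'v set \<Rightarrow> ('v \<Rightarrow> 'v \<Rightarrow> bool) \<Rightarrow> bool" where
  "graph V E \<longleftrightarrow>
     V \<noteq> {} \<and> countable V \<and>
     (\<forall>i j. E i j \<longrightarrow> i \<in> V \<and> j \<in> V) \<and>
     (\<forall>i j. E i j \<longrightarrow> E j i) \<and>
     (\<forall>i. \<not> E i i) \<and>
     (\<forall>i\<in>V. finite {j. E i j}) \<and>
     (\<forall>i\<in>V. \<forall>j\<in>V. (i, j) \<in> {(x, y). E x y}\<^sup>*)"

definition adj :: "('v \<Rightarrow> 'v \<Rightarrow> bool) \<Rightarrow> 'v \<Rightarrow> 'v \<Rightarrow> real" where
  "adj E i j = (if E i j then 1 else 0)"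

definition deg :: "('v \<Rightarrow> 'v \<Rightarrow> bool) \<Rightarrow> 'v \<Rightarrow> nat" where
  "deg E i = card {j. E i j}"

definition evo_carrier :: "'v set \<Rightarrow> ('v \<Rightarrow> real) set" where
  "evo_carrier V = {x. finite {i. x i \<noteq> 0} \<and> (\<forall>i. i \<notin> V \<longrightarrow> x i = 0)}"

definition basis_vec :: "'v \<Rightarrow> 'v \<Rightarrow> real" where
  "basis_vec i = (\<lambda>j. if j = i then 1 else 0)"

text \<open>Product with structure constants C: e_i e_j = 0 for i \<noteq> j,
  e_i e_i = sum_k C i k e_k (C i has finite support).\<close>

definition evo_mult :: "'v set \<Rightarrow> ('v \<Rightarrow> 'v \<Rightarrow> real) \<Rightarrow> ('v \<Rightarrow> real) \<Rightarrow> ('v \<Rightarrow> real) \<Rightarrow> ('v \<Rightarrow> real)" where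
  "evo_mult V C x y = (\<lambda>k. \<Sum>i\<in>{i\<in>V. x i \<noteq> 0 \<and> y i \<noteq> 0}. x i * y i * C i k)"

definition C_G :: "('v \<Rightarrow> 'v \<Rightarrow> bool) \<Rightarrow> 'v \<Rightarrow> 'v \<Rightarrow> real" where
  "C_G E i k = adj E i k"

definition C_RW :: "('v \<Rightarrow> 'v \<Rightarrow> bool) \<Rightarrow> 'v \<Rightarrow> 'v \<Rightarrow> real" where
  "C_RW E i k = adj E i k / real (deg E i)"

definition evo_iso :: "'v set \<Rightarrow> ('v \<Rightarrow> 'v \<Rightarrow> real) \<Rightarrow> ('v \<Rightarrow> 'v \<Rightarrow> real)
    \<Rightarrow> (('v \<Rightarrow> real) \<Rightarrow> ('v \<Rightarrow> real)) \<Rightarrow> bool" where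
  "evo_iso V C1 C2 f \<longleftrightarrow>
     bij_betw f (evo_carrier V) (evo_carrier V) \<and>
     (\<forall>x\<in>evo_carrier V. \<forall>y\<in>evo_carrier V. f (\<lambda>j. x j + y j) = (\<lambda>j. f x j + f y j)) \<and>
     (\<forall>c. \<forall>x\<in>evo_carrier V. f (\<lambda>j. c * x j) = (\<lambda>j. c * f x j)) \<and>
     (\<forall>x\<in>evo_carrier V. \<forall>y\<in>evo_carrier V.
        f (evo_mult V C1 x y) = evo_mult V C2 (f x) (f y))"

end

theory Submission
  imports Defs
begin

lemma lin_sum:
  assumes iso: "evo_iso V C1 C2 f" and fin: "finite S" and SV: "S \<subseteq> V"
  shows "f (\<lambda>j. \<Sum>s\<in>S. c s * basis_vec s j) = (\<lambda>j. \<Sum>s\<in>S. c s * f (basis_vec s) j)"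
  using fin SV
proof (induction S rule: finite_induct)
  case empty
  have z: "(\<lambda>j. 0::real) \<in> evo_carrier V" by (simp add: evo_carrier_def)
  have sc: "\<And>c x. x \<in> evo_carrier V \<Longrightarrow> f (\<lambda>j. c * x j) = (\<lambda>j. c * f x j)"
    using iso unfolding evo_iso_def by blast
  have "f (\<lambda>j. 0 * (\<lambda>j. 0::real) j) = (\<lambda>j. 0 * f (\<lambda>j. 0) j)"
    by (rule sc[OF z])
  then show ?case by simp
next
  case (insert x F)
  have bx: "basis_vec x \<in> evo_carrier V" using insert.prems
    by (auto simp: evo_carrier_def basis_vec_def)
  have cx: "(\<lambda>j. c x * basis_vec x j) \<in> evo_carrier V"
    using insert.prems by (auto simp: evo_carrier_def basis_vec_def)
  have cF: "(\<lambda>j. \<Sum>s\<in>F. c s * basis_vec s j) \<in> evo_carrier V"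
  proof -
    have "{j. (\<Sum>s\<in>F. c s * basis_vec s j) \<noteq> 0} \<subseteq> F"
    proof
      fix j assume "j \<in> {j. (\<Sum>s\<in>F. c s * basis_vec s j) \<noteq> 0}"
      then obtain s where "s \<in> F" "c s * basis_vec s j \<noteq> 0"
        by (metis (mono_tags, lifting) mem_Collect_eq sum.neutral)
      then show "j \<in> F" by (auto simp: basis_vec_def split: if_splits)
    qed
    moreover have "\<forall>j. j \<notin> V \<longrightarrow> (\<Sum>s\<in>F. c s * basis_vec s j) = 0"
      using insert.prems by (auto simp: basis_vec_def intro!: sum.neutral)
    ultimately show ?thesis using insert.hyps(1)
      by (auto simp: evo_carrier_def intro: finite_subset)
  qed
  have eq: "(\<lambda>j. \<Sum>s\<in>insert x F. c s * basis_vec s j)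
      = (\<lambda>j. c x * basis_vec x j + (\<Sum>s\<in>F. c s * basis_vec s j))"
    using insert.hyps by simp
  have "f (\<lambda>j. c x * basis_vec x j + (\<Sum>s\<in>F. c s * basis_vec s j))
     = (\<lambda>j. f (\<lambda>j. c x * basis_vec x j) j + f (\<lambda>j. \<Sum>s\<in>F. c s * basis_vec s j) j)"
  proof -
    have ad: "\<And>x y. x \<in> evo_carrier V \<Longrightarrow> y \<in> evo_carrier V \<Longrightarrow> f (\<lambda>j. x j + y j) = (\<lambda>j. f x j + f y j)"
      using iso unfolding evo_iso_def by blast
    show ?thesis using ad[OF cx cF] by simp
  qed
  moreover have "f (\<lambda>j. c x * basis_vec x j) = (\<lambda>j. c x * f (basis_vec x) j)"
  proof -
    have sc: "\<And>c x. x \<in> evo_carrier V \<Longrightarrow> f (\<lambda>j. c * x j) = (\<lambda>j. c * f x j)"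
      using iso unfolding evo_iso_def by blast
    show ?thesis by (rule sc[OF bx])
  qed
  ultimately show ?case using insert eq by simp
qed

theorem proposition2p13:
  fixes V :: "'v set" and E :: "'v \<Rightarrow> 'v \<Rightarrow> bool"
    and f :: "('v \<Rightarrow> real) \<Rightarrow> ('v \<Rightarrow> real)"
    and \<pi> :: "'v \<Rightarrow> 'v" and \<alpha> :: "'v \<Rightarrow> real"
  assumes "graph V E"
    and "bij_betw \<pi> V V"
    and "\<forall>i\<in>V. \<alpha> i \<noteq> 0"
    and "\<forall>i\<in>V. f (basis_vec i) = (\<lambda>j. \<alpha> i * basis_vec (\<pi> i) j)"
    and "evo_iso V (C_RW E) (C_G E) f"
  shows "\<forall>i\<in>V. \<forall>k\<in>V.
           adj E i (inv_into V \<pi> k) * \<alpha> (inv_into V \<pi> k)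
             = real (deg E i) * (\<alpha> i)^2 * adj E (\<pi> i) k"
proof (intro ballI)
  fix i k assume iV: "i \<in> V" and kV: "k \<in> V"
  note G = assms(1)[unfolded graph_def]
  define N where "N = {j. E i j}"
  have finN: "finite N" using G iV N_def by auto
  have NV: "N \<subseteq> V" using G N_def by auto
  define m where "m = inv_into V \<pi> k"
  have mV: "m \<in> V" and pm: "\<pi> m = k"
    using assms(2) kV unfolding m_def
    by (auto simp: bij_betw_def inv_into_into f_inv_into_f)
  have injp: "inj_on \<pi> V" using assms(2) bij_betw_def by blast
  have bi: "basis_vec i \<in> evo_carrier V" using iV
    by (auto simp: evo_carrier_def basis_vec_def)
  have hom: "f (evo_mult V (C_RW E) (basis_vec i) (basis_vec i))
     = evo_mult V (C_G E) (f (basis_vec i)) (f (basis_vec i))"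
    using assms(5) bi unfolding evo_iso_def by blast
  have set1: "{j\<in>V. basis_vec i j \<noteq> 0 \<and> basis_vec i j \<noteq> 0} = {i}"
    using iV by (auto simp: basis_vec_def)
  have L1: "evo_mult V (C_RW E) (basis_vec i) (basis_vec i) = (\<lambda>k. C_RW E i k)"
    unfolding evo_mult_def set1 by (simp add: basis_vec_def)
  have L2: "(\<lambda>k. C_RW E i k) = (\<lambda>j. \<Sum>s\<in>N. C_RW E i s * basis_vec s j)"
  proof
    fix j
    show "C_RW E i j = (\<Sum>s\<in>N. C_RW E i s * basis_vec s j)"
    proof (cases "j \<in> N")
      case True
      have "(\<Sum>s\<in>N. C_RW E i s * basis_vec s j) = (\<Sum>s\<in>{j}. C_RW E i s * basis_vec s j)"
        using True finN by (intro sum.mono_neutral_right) (auto simp: basis_vec_def)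
      then show ?thesis by (simp add: basis_vec_def)
    next
      case False
      then have "C_RW E i j = 0" by (simp add: C_RW_def adj_def N_def)
      moreover have "(\<Sum>s\<in>N. C_RW E i s * basis_vec s j) = 0"
        using False by (auto simp: basis_vec_def intro!: sum.neutral)
      ultimately show ?thesis by simp
    qed
  qed
  have LHS: "f (evo_mult V (C_RW E) (basis_vec i) (basis_vec i))
     = (\<lambda>j. \<Sum>s\<in>N. C_RW E i s * f (basis_vec s) j)"
    by (rule trans[OF arg_cong[where f=f, OF trans[OF L1 L2]] lin_sum[OF assms(5) finN NV]])
  have LHSk: "(\<Sum>s\<in>N. C_RW E i s * f (basis_vec s) k) = C_RW E i m * \<alpha> m"
  proof -
    have t: "\<And>s. s \<in> N \<Longrightarrow> C_RW E i s * f (basis_vec s) k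
       = (if s = m then C_RW E i m * \<alpha> m else 0)"
    proof -
      fix s assume sN: "s \<in> N"
      then have sV: "s \<in> V" using NV by auto
      have "\<pi> s = k \<longleftrightarrow> s = m" using injp sV mV pm by (metis inj_on_eq_iff)
      then show "C_RW E i s * f (basis_vec s) k = (if s = m then C_RW E i m * \<alpha> m else 0)"
        using assms(4) sV by (auto simp: basis_vec_def)
    qed
    have "(\<Sum>s\<in>N. C_RW E i s * f (basis_vec s) k) = (\<Sum>s\<in>N. if s = m then C_RW E i m * \<alpha> m else 0)"
      using t by (rule sum.cong[OF refl])
    also have "\<dots> = (if m \<in> N then C_RW E i m * \<alpha> m else 0)"
      using finN by (simp add: sum.delta')
    also have "\<dots> = C_RW E i m * \<alpha> m"
      by (simp add: C_RW_def adj_def N_def)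
    finally show ?thesis .
  qed
  have fi: "f (basis_vec i) = (\<lambda>j. \<alpha> i * basis_vec (\<pi> i) j)" using assms(4) iV by blast
  have piV: "\<pi> i \<in> V" using assms(2) iV bij_betwE by blast
  have ai: "\<alpha> i \<noteq> 0" using assms(3) iV by blast
  have set2: "{j\<in>V. \<alpha> i * basis_vec (\<pi> i) j \<noteq> 0 \<and> \<alpha> i * basis_vec (\<pi> i) j \<noteq> 0} = {\<pi> i}"
    using piV ai by (auto simp: basis_vec_def)
  have RHSk: "evo_mult V (C_G E) (f (basis_vec i)) (f (basis_vec i)) k = (\<alpha> i)^2 * adj E (\<pi> i) k"
    unfolding fi evo_mult_def set2 by (simp add: basis_vec_def C_G_def power2_eq_square)
  have key: "adj E i m / real (deg E i) * \<alpha> m = (\<alpha> i)^2 * adj E (\<pi> i) k"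
    using hom LHS LHSk RHSk by (metis C_RW_def)
  show "adj E i (inv_into V \<pi> k) * \<alpha> (inv_into V \<pi> k)
             = real (deg E i) * (\<alpha> i)^2 * adj E (\<pi> i) k"
  proof (cases "deg E i = 0")
    case True
    then have "N = {}" using finN by (simp add: deg_def N_def)
    then have "adj E i m = 0" by (simp add: adj_def N_def)
    then show ?thesis using True m_def by simp
  next
    case False
    then show ?thesis using key m_def by (simp add: field_simps)
  qed
qed

end
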